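(* Let $\phi:(\Gamma,w)\to(\Gamma',w')$ be a pseudo-harmonic morphism of vertex-weighted metric graphs with respect to loopless models $(G,\ell)$ and $(G',\ell')$. Then $\deg(\phi^*(K_{(\Gamma',w')}))=\deg(\phi)\deg(K_{(\Gamma',w')})$.
   Context: A vertex-weighted metric graph $(\Gamma,w)$ with loopless model $(G,\ell)$: $G$ a finite connected loopless multigraph, $\ell:E(G)\to\mathbb{R}_{>0}$, $w:V(G)\to\mathbb{Z}_{\ge0}$; $val(v)$ is the number of edges at $v$. Canonical divisor: $K_{(\Gamma,w)}=\sum_{v\in V(G)}(val(v)-2+2w(v))(v)$. A morphism of loopless models maps vertices to vertices and each edge $e=xy$ either to a vertex $\phi(x)=\phi(e)=\phi(y)$ ($U_\phi(e)=0$) or to an edge between $\phi(x),\phi(y)$ with $U_\phi(e)=\ell'(\phi(e))/\ell(e)\in\mathbb{Z}_{>0}$. Pseudo-harmonic: $M_\phi(v)=\sum_{e\ni v,\phi(e)=e'}U_\phi(e)$ is the same for all $e'\in E(G')$ incident to $\phi(v)$. $\deg\phi=\sum_{\phi(e)=e'}U_\phi(e)$ for any $e'\in E(G')$. Pullback: $\phi^*D'=\sum_{v\in V(G)}M_\phi(v)D'(\phi(v))(v)$. *)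

theory Defs
  imports Main "HOL.Real"
begin

definition adjacent :: "'e set \<Rightarrow> ('e \<Rightarrow> 'v set) \<Rightarrow> 'v \<Rightarrow> 'v \<Rightarrow> bool" where
  "adjacent E ends x y \<longleftrightarrow> (\<exists>e\<in>E. ends e = {x, y})"

definition loopless_model :: "'v set \<Rightarrow> 'e set \<Rightarrow> ('e \<Rightarrow> 'v set) \<Rightarrow> ('e \<Rightarrow> real) \<Rightarrow> bool" where
  "loopless_model V E ends len \<longleftrightarrow>
     finite V \<and> finite E \<and> V \<noteq> {} \<and>
     (\<forall>e\<in>E. ends e \<subseteq> V \<and> card (ends e) = 2 \<and> len e > 0) \<and>
     (\<forall>x\<in>V. \<forall>y\<in>V. (adjacent E ends)\<^sup>*\<^sup>* x y)"

definition val :: "'e set \<Rightarrow> ('e \<Rightarrow> 'v set) \<Rightarrow> 'v \<Rightarrow> nat" where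
  "val E ends v = card {e\<in>E. v \<in> ends e}"

text \<open>Divisors on the model: integer functions on vertices (zero off V).\<close>
definition div_deg :: "'v set \<Rightarrow> ('v \<Rightarrow> int) \<Rightarrow> int" where
  "div_deg V D = (\<Sum>v\<in>V. D v)"

definition canonical_divisor :: "'v set \<Rightarrow> 'e set \<Rightarrow> ('e \<Rightarrow> 'v set) \<Rightarrow> ('v \<Rightarrow> nat) \<Rightarrow> 'v \<Rightarrow> int" where
  "canonical_divisor V E ends w v =
     (if v \<in> V then int (val E ends v) - 2 + 2 * int (w v) else 0)"

text \<open>Morphism of loopless models: vertex map fV, edge map fE sending each edge either to
  a vertex (Inl) or to an edge (Inr) of G'.\<close>
definition is_morphism ::
  "'v set \<Rightarrow> 'e set \<Rightarrow> ('e \<Rightarrow> 'v set) \<Rightarrow> ('e \<Rightarrow> real) \<Rightarrow>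
   'w set \<Rightarrow> 'f set \<Rightarrow> ('f \<Rightarrow> 'w set) \<Rightarrow> ('f \<Rightarrow> real) \<Rightarrow>
   ('v \<Rightarrow> 'w) \<Rightarrow> ('e \<Rightarrow> 'w + 'f) \<Rightarrow> bool" where
  "is_morphism V E ends len V' E' ends' len' fV fE \<longleftrightarrow>
     (\<forall>v\<in>V. fV v \<in> V') \<and>
     (\<forall>e\<in>E. case fE e of
        Inl v' \<Rightarrow> (\<forall>x\<in>ends e. fV x = v')
      | Inr e' \<Rightarrow> e' \<in> E' \<and> fV ` ends e = ends' e' \<and>
                  (\<exists>k::nat. k > 0 \<and> len' e' / len e = real k))"

definition dilation :: "('e \<Rightarrow> real) \<Rightarrow> ('f \<Rightarrow> real) \<Rightarrow> ('e \<Rightarrow> 'w + 'f) \<Rightarrow> 'e \<Rightarrow> nat" where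
  "dilation len len' fE e =
     (case fE e of Inl _ \<Rightarrow> 0 | Inr e' \<Rightarrow> nat \<lfloor>len' e' / len e\<rfloor>)"

definition mult_at ::
  "'e set \<Rightarrow> ('e \<Rightarrow> 'v set) \<Rightarrow> ('e \<Rightarrow> real) \<Rightarrow> ('f \<Rightarrow> real) \<Rightarrow> ('e \<Rightarrow> 'w + 'f) \<Rightarrow> 'v \<Rightarrow> 'f \<Rightarrow> nat" where
  "mult_at E ends len len' fE v e' =
     (\<Sum>e\<in>{e\<in>E. v \<in> ends e \<and> fE e = Inr e'}. dilation len len' fE e)"

definition pseudo_harmonic ::
  "'v set \<Rightarrow> 'e set \<Rightarrow> ('e \<Rightarrow> 'v set) \<Rightarrow> ('e \<Rightarrow> real) \<Rightarrow>
   'w set \<Rightarrow> 'f set \<Rightarrow> ('f \<Rightarrow> 'w set) \<Rightarrow> ('f \<Rightarrow> real) \<Rightarrow>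
   ('v \<Rightarrow> 'w) \<Rightarrow> ('e \<Rightarrow> 'w + 'f) \<Rightarrow> bool" where
  "pseudo_harmonic V E ends len V' E' ends' len' fV fE \<longleftrightarrow>
     is_morphism V E ends len V' E' ends' len' fV fE \<and>
     (\<forall>v\<in>V. \<forall>e1\<in>E'. \<forall>e2\<in>E'. fV v \<in> ends' e1 \<longrightarrow> fV v \<in> ends' e2 \<longrightarrow>
        mult_at E ends len len' fE v e1 = mult_at E ends len len' fE v e2)"

text \<open>M_phi(v): the common value, computed at some edge of G' incident to phi(v).\<close>
definition local_mult ::
  "'e set \<Rightarrow> ('e \<Rightarrow> 'v set) \<Rightarrow> ('e \<Rightarrow> real) \<Rightarrow> 'f set \<Rightarrow> ('f \<Rightarrow> 'w set) \<Rightarrow> ('f \<Rightarrow> real) \<Rightarrow>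
   ('v \<Rightarrow> 'w) \<Rightarrow> ('e \<Rightarrow> 'w + 'f) \<Rightarrow> 'v \<Rightarrow> nat" where
  "local_mult E ends len E' ends' len' fV fE v =
     mult_at E ends len len' fE v (SOME e'. e' \<in> E' \<and> fV v \<in> ends' e')"

definition morph_deg ::
  "'e set \<Rightarrow> ('e \<Rightarrow> real) \<Rightarrow> 'f set \<Rightarrow> ('f \<Rightarrow> real) \<Rightarrow> ('e \<Rightarrow> 'w + 'f) \<Rightarrow> nat" where
  "morph_deg E len E' len' fE =
     (let e0 = (SOME e'. e' \<in> E') in
      \<Sum>e\<in>{e\<in>E. fE e = Inr e0}. dilation len len' fE e)"

definition pullback ::
  "'v set \<Rightarrow> 'e set \<Rightarrow> ('e \<Rightarrow> 'v set) \<Rightarrow> ('e \<Rightarrow> real) \<Rightarrow> 'f set \<Rightarrow> ('f \<Rightarrow> 'w set) \<Rightarrow> ('f \<Rightarrow> real) \<Rightarrow>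
   ('v \<Rightarrow> 'w) \<Rightarrow> ('e \<Rightarrow> 'w + 'f) \<Rightarrow> ('w \<Rightarrow> int) \<Rightarrow> 'v \<Rightarrow> int" where
  "pullback V E ends len E' ends' len' fV fE D' v =
     (if v \<in> V then int (local_mult E ends len E' ends' len' fV fE v) * D' (fV v) else 0)"

end

theory Submission
  imports Defs
begin

lemma fiber_card_one:
  assumes fin: "finite A" and cA: "card A = 2" and cB: "card B = 2"
    and img: "f ` A = B" and b: "b \<in> B"
  shows "card {x\<in>A. f x = b} = 1"
proof -
  have inj: "inj_on f A" using img cA cB fin by (intro eq_card_imp_inj_on) auto
  obtain a where a: "a \<in> A" "f a = b" using img b by blast
  have "{x\<in>A. f x = b} = {a}" using inj a by (auto simp: inj_on_def)
  then show ?thesis by simp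
qed

lemma key_A:
  assumes LM: "loopless_model V E ends len"
    and M: "is_morphism V E ends len V' E' ends' len' fV fE"
    and LM': "loopless_model V' E' ends' len'"
    and e': "e' \<in> E'" and v': "v' \<in> ends' e'"
  shows "(\<Sum>v\<in>{v\<in>V. fV v = v'}. mult_at E ends len len' fE v e')
       = (\<Sum>e\<in>{e\<in>E. fE e = Inr e'}. dilation len len' fE e)"
proof -
  let ?U = "dilation len len' fE"
  have fV: "finite V" and fE: "finite E" using LM by (auto simp: loopless_model_def)
  have "(\<Sum>v\<in>{v\<in>V. fV v = v'}. mult_at E ends len len' fE v e')
      = (\<Sum>v\<in>V. \<Sum>e\<in>E. if fV v = v' \<and> v \<in> ends e \<and> fE e = Inr e' then ?U e else 0)"
    unfolding mult_at_def sum.inter_filter[OF fV] sum.inter_filter[OF fE]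
    by (intro sum.cong refl) auto
  also have "\<dots> = (\<Sum>e\<in>E. \<Sum>v\<in>V. if fV v = v' \<and> v \<in> ends e \<and> fE e = Inr e' then ?U e else 0)"
    by (rule sum.swap)
  also have "\<dots> = (\<Sum>e\<in>E. if fE e = Inr e' then ?U e else 0)"
  proof (rule sum.cong[OF refl])
    fix e assume eE: "e \<in> E"
    show "(\<Sum>v\<in>V. if fV v = v' \<and> v \<in> ends e \<and> fE e = Inr e' then ?U e else 0)
        = (if fE e = Inr e' then ?U e else 0)"
    proof (cases "fE e = Inr e'")
      case True
      have sub: "ends e \<subseteq> V" and c2: "card (ends e) = 2" using LM eE by (auto simp: loopless_model_def)
      have "case fE e of Inl v' \<Rightarrow> (\<forall>x\<in>ends e. fV x = v')
        | Inr e' \<Rightarrow> e' \<in> E' \<and> fV ` ends e = ends' e' \<and> (\<exists>k::nat. k > 0 \<and> len' e' / len e = real k)"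
        using M eE unfolding is_morphism_def by blast
      then have img: "fV ` ends e = ends' e'" using True by simp
      have c2': "card (ends' e') = 2" using LM' e' by (auto simp: loopless_model_def)
      have finA: "finite (ends e)" using c2 card.infinite by fastforce
      have set: "{v\<in>V. fV v = v' \<and> v \<in> ends e} = {x\<in>ends e. fV x = v'}" using sub by auto
      have "(\<Sum>v\<in>V. if fV v = v' \<and> v \<in> ends e \<and> fE e = Inr e' then ?U e else 0)
          = (\<Sum>v\<in>{v\<in>V. fV v = v' \<and> v \<in> ends e}. ?U e)"
        using True fV by (simp add: sum.inter_filter[OF fV, symmetric])
      also have "\<dots> = card {x\<in>ends e. fV x = v'} * ?U e" by (simp add: set)
      also have "\<dots> = ?U e" using fiber_card_one[OF finA c2 c2' img v'] by simp
      finally show ?thesis using True by simp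
    qed simp
  qed
  also have "\<dots> = (\<Sum>e\<in>{e\<in>E. fE e = Inr e'}. ?U e)"
    using fE by (simp add: sum.inter_filter)
  finally show ?thesis .
qed

theorem lemma6p9:
  fixes V :: "'v set" and E :: "'e set" and ends :: "'e \<Rightarrow> 'v set" and len :: "'e \<Rightarrow> real"
    and w :: "'v \<Rightarrow> nat"
    and V' :: "'w set" and E' :: "'f set" and ends' :: "'f \<Rightarrow> 'w set" and len' :: "'f \<Rightarrow> real"
    and w' :: "'w \<Rightarrow> nat"
    and fV :: "'v \<Rightarrow> 'w" and fE :: "'e \<Rightarrow> 'w + 'f"
  assumes "loopless_model V E ends len"
    and "loopless_model V' E' ends' len'"
    and "pseudo_harmonic V E ends len V' E' ends' len' fV fE"
  shows "div_deg V (pullback V E ends len E' ends' len' fV fE (canonical_divisor V' E' ends' w'))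
         = int (morph_deg E len E' len' fE) * div_deg V' (canonical_divisor V' E' ends' w')"
proof -
  note LM = assms(1) and LM' = assms(2)
  have M: "is_morphism V E ends len V' E' ends' len' fV fE"
    and PH: "\<forall>v\<in>V. \<forall>e1\<in>E'. \<forall>e2\<in>E'. fV v \<in> ends' e1 \<longrightarrow> fV v \<in> ends' e2 \<longrightarrow>
        mult_at E ends len len' fE v e1 = mult_at E ends len len' fE v e2"
    using assms(3) unfolding pseudo_harmonic_def by blast+
  have finV: "finite V" and finE: "finite E" using LM by (auto simp: loopless_model_def)
  have finV': "finite V'" using LM' by (auto simp: loopless_model_def)
  have conn: "\<forall>x\<in>V'. \<forall>y\<in>V'. (adjacent E' ends')\<^sup>*\<^sup>* x y" using LM' by (auto simp: loopless_model_def)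
  have fVV: "fV ` V \<subseteq> V'" using M unfolding is_morphism_def by blast
  define Lm where "Lm = local_mult E ends len E' ends' len' fV fE"
  define K where "K = canonical_divisor V' E' ends' w'"
  define D where "D = (\<lambda>e'. \<Sum>e\<in>{e\<in>E. fE e = Inr e'}. dilation len len' fE e)"
  define S where "S = (\<lambda>v'. \<Sum>v\<in>{v\<in>V. fV v = v'}. Lm v)"
  have inrE: "\<And>e e'. e \<in> E \<Longrightarrow> fE e = Inr e' \<Longrightarrow> e' \<in> E'"
  proof -
    fix e e' assume a: "e \<in> E" "fE e = Inr e'"
    have "case fE e of Inl v' \<Rightarrow> (\<forall>x\<in>ends e. fV x = v')
        | Inr e' \<Rightarrow> e' \<in> E' \<and> fV ` ends e = ends' e' \<and> (\<exists>k::nat. k > 0 \<and> len' e' / len e = real k)"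
      using M a(1) unfolding is_morphism_def by blast
    then show "e' \<in> E'" using a(2) by simp
  qed
  have B: "Lm v = mult_at E ends len len' fE v e'"
    if "v \<in> V" "e' \<in> E'" "fV v \<in> ends' e'" for v e'
  proof -
    have ex: "\<exists>e'. e' \<in> E' \<and> fV v \<in> ends' e'" using that by blast
    from someI_ex[OF ex] PH that show ?thesis
      unfolding Lm_def local_mult_def by blast
  qed
  have SD: "S v' = D e'" if "e' \<in> E'" "v' \<in> ends' e'" for v' e'
  proof -
    have "S v' = (\<Sum>v\<in>{v\<in>V. fV v = v'}. mult_at E ends len len' fE v e')"
      unfolding S_def using B that by (intro sum.cong) auto
    also have "\<dots> = D e'" unfolding D_def by (rule key_A[OF LM M LM' that])
    finally show ?thesis .
  qed
  have Sconst: "S y = S x" if "(adjacent E' ends')\<^sup>*\<^sup>* x y" for x y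
    using that
  proof (induction rule: rtranclp_induct)
    case (step y z)
    then obtain e where "e \<in> E'" "ends' e = {y, z}" by (auto simp: adjacent_def)
    then have "S z = S y" using SD[of e y] SD[of e z] by auto
    then show ?case using step by simp
  qed simp
  have Sdeg: "S v' = morph_deg E len E' len' fE" if "v' \<in> V'" for v'
  proof (cases "E' = {}")
    case True
    have "S v' = 0" unfolding S_def
    proof (intro sum.neutral ballI)
      fix v assume "v \<in> {v\<in>V. fV v = v'}"
      show "Lm v = 0" unfolding Lm_def local_mult_def mult_at_def
        using inrE True by (intro sum.neutral) auto
    qed
    moreover have "morph_deg E len E' len' fE = 0" unfolding morph_deg_def Let_def
      using inrE True by (intro sum.neutral) auto
    ultimately show ?thesis by simp
  next
    case False
    define e0 where "e0 = (SOME e'. e' \<in> E')"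
    have e0: "e0 \<in> E'" using False unfolding e0_def by (meson ex_in_conv someI_ex)
    have "card (ends' e0) = 2" "ends' e0 \<subseteq> V'" using LM' e0 by (auto simp: loopless_model_def)
    then have "ends' e0 \<noteq> {}" by auto
    then obtain a where a: "a \<in> ends' e0" by blast
    then have aV: "a \<in> V'" using \<open>ends' e0 \<subseteq> V'\<close> by blast
    have "S v' = S a" using Sconst[OF conn[rule_format, OF aV that]] .
    also have "\<dots> = D e0" using SD[OF e0 a] .
    also have "\<dots> = morph_deg E len E' len' fE" unfolding morph_deg_def D_def e0_def Let_def ..
    finally show ?thesis .
  qed
  have "div_deg V (pullback V E ends len E' ends' len' fV fE K)
      = (\<Sum>v\<in>V. int (Lm v) * K (fV v))"
    unfolding div_deg_def pullback_def Lm_def by (intro sum.cong) auto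
  also have "\<dots> = (\<Sum>v'\<in>V'. \<Sum>v\<in>{v\<in>V. fV v = v'}. int (Lm v) * K (fV v))"
    by (rule sum.group[OF finV finV' fVV, symmetric])
  also have "\<dots> = (\<Sum>v'\<in>V'. int (S v') * K v')"
  proof (rule sum.cong[OF refl])
    fix x assume "x \<in> V'"
    have "(\<Sum>v\<in>{v\<in>V. fV v = x}. int (Lm v) * K (fV v)) = (\<Sum>v\<in>{v\<in>V. fV v = x}. int (Lm v) * K x)"
      by (rule sum.cong) auto
    also have "\<dots> = int (S x) * K x" unfolding S_def by (simp add: sum_distrib_right)
    finally show "(\<Sum>v\<in>{v\<in>V. fV v = x}. int (Lm v) * K (fV v)) = int (S x) * K x" .
  qed
  also have "\<dots> = (\<Sum>v'\<in>V'. int (morph_deg E len E' len' fE) * K v')"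
    using Sdeg by (intro sum.cong) auto
  also have "\<dots> = int (morph_deg E len E' len' fE) * div_deg V' K"
    unfolding div_deg_def by (simp add: sum_distrib_left)
  finally show ?thesis unfolding K_def .
qed

end
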